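(* Let $X$, $Y$ be real Banach spaces, let $\Omega$ be a measure space, $Z:=L^2(\Omega)$, and let $e:Y\to Z$ be a linear continuous dense embedding. Let $f:X\to\mathbb{R}$ and $g:X\to Y$, and consider the problem $\min f(x)$ s.t. $g(x)\le 0$. Assume that $f$ and $x\mapsto\|g_+(x)\|_Z$ are weakly lower semicontinuous on $X$. Let $(x^k)$ be a sequence generated by the augmented Lagrangian algorithm described in the context, where in Step 2 the iterate $x^{k+1}$ is chosen such that there is a sequence $\varepsilon_k\downarrow 0$ with $L_{\rho_k}(x^{k+1},w^k)\le L_{\rho_k}(x,w^k)+\varepsilon_k$ for all $x\in X$ and all $k\in\mathbb{N}$. Let $\bar x$ be a weak limit point of $(x^k)$. Then: (a) $\bar x$ is a global minimizer of the function $x\mapsto\|g_+(x)\|_Z^2$ on $X$; (b) if $\bar x$ is feasible (i.e. $g(\bar x)\le 0$), then $\bar x$ is a (global) solution of $\min f(x)$ s.t. $g(x)\le 0$.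
   Context: The order on $Y$ is induced by $Z$: $y\le 0$ in $Y$ means $e(y)\le 0$ a.e. on $\Omega$. For $z\in Z$, $z_+:=\max\{z,0\}$, $z_-:=\max\{-z,0\}$ (pointwise); for $x\in X$, $g_+(x):=(e(g(x)))_+$, and $\min$ of elements of $Z$ is pointwise. $\langle\cdot,\cdot\rangle$ is the inner product of $Z$. The augmented Lagrangian is $L_\rho(x,\lambda):=f(x)+\frac{\rho}{2}\big\|\big(g(x)+\frac{\lambda}{\rho}\big)_+\big\|_Z^2$ for $x\in X$, $\lambda\in Z$, $\rho>0$ (with $g(x)$ viewed in $Z$ via $e$). Algorithm: (S.0) Choose $(x^0,\lambda^0)\in X\times Z$, $\rho_0>0$, $w^{\max}\in Z$ with $w^{\max}\ge 0$ a.e., $\gamma>1$, $\tau\in(0,1)$; set $k=0$. (S.2) Choose $w^k\in Z$ with $0\le w^k\le w^{\max}$ a.e. and compute an approximate minimizer $x^{k+1}$ of $x\mapsto L_{\rho_k}(x,w^k)$ over $X$. (S.3) Set $\lambda^{k+1}:=(w^k+\rho_k g(x^{k+1}))_+$. If $k=0$ or $\big\|\min\{-g(x^{k+1}),w^k/\rho_k\}\big\|_Z\le\tau\big\|\min\{-g(x^k),w^{k-1}/\rho_{k-1}\}\big\|_Z$, set $\rho_{k+1}:=\rho_k$; otherwise set $\rho_{k+1}:=\gamma\rho_k$. (S.4) Set $k\leftarrow k+1$ and go to (S.2). The algorithm is run without stopping, producing infinite sequences. *)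

theory Defs
  imports "HOL-Analysis.Analysis"
begin

text \<open>The Hilbert space Z = L^2(Omega) is represented by (representatives of) square
  integrable real functions on the measure space M; equality/order in Z is a.e.\<close>

definition L2 :: "'w measure \<Rightarrow> ('w \<Rightarrow> real) set" where
  "L2 M = {z. z \<in> borel_measurable M \<and> integrable M (\<lambda>\<omega>. (z \<omega>)^2)}"

definition L2norm :: "'w measure \<Rightarrow> ('w \<Rightarrow> real) \<Rightarrow> real" where
  "L2norm M z = sqrt (LINT \<omega>|M. (z \<omega>)^2)"

definition pos_part :: "('w \<Rightarrow> real) \<Rightarrow> ('w \<Rightarrow> real)" where
  "pos_part z = (\<lambda>\<omega>. max (z \<omega>) 0)"

definition dense_embedding :: "'w measure \<Rightarrow> ('y::real_normed_vector \<Rightarrow> 'w \<Rightarrow> real) \<Rightarrow> bool" where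
  "dense_embedding M e \<longleftrightarrow>
     (\<forall>a b y1 y2. e (a *\<^sub>R y1 + b *\<^sub>R y2) = (\<lambda>\<omega>. a * e y1 \<omega> + b * e y2 \<omega>)) \<and>
     (\<forall>y. e y \<in> L2 M) \<and>
     (\<exists>C. \<forall>y. L2norm M (e y) \<le> C * norm y) \<and>
     (\<forall>y. (AE \<omega> in M. e y \<omega> = 0) \<longrightarrow> y = 0) \<and>
     (\<forall>z\<in>L2 M. \<forall>\<epsilon>>0. \<exists>y. L2norm M (\<lambda>\<omega>. e y \<omega> - z \<omega>) < \<epsilon>)"

definition gplus :: "('y \<Rightarrow> 'w \<Rightarrow> real) \<Rightarrow> ('x \<Rightarrow> 'y) \<Rightarrow> 'x \<Rightarrow> 'w \<Rightarrow> real" where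
  "gplus e g x = pos_part (e (g x))"

definition aug_lagr :: "'w measure \<Rightarrow> ('y \<Rightarrow> 'w \<Rightarrow> real) \<Rightarrow> ('x \<Rightarrow> real) \<Rightarrow> ('x \<Rightarrow> 'y)
    \<Rightarrow> real \<Rightarrow> 'x \<Rightarrow> ('w \<Rightarrow> real) \<Rightarrow> real" where
  "aug_lagr M e f g \<rho> x l = f x + \<rho> / 2 * (L2norm M (pos_part (\<lambda>\<omega>. e (g x) \<omega> + l \<omega> / \<rho>)))^2"

definition weak_conv :: "(nat \<Rightarrow> 'a::real_normed_vector) \<Rightarrow> 'a \<Rightarrow> bool" where
  "weak_conv s x \<longleftrightarrow> (\<forall>\<phi>::'a \<Rightarrow> real. bounded_linear \<phi> \<longrightarrow> (\<lambda>k. \<phi> (s k)) \<longlonglongrightarrow> \<phi> x)"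

definition weakly_lsc :: "('a::real_normed_vector \<Rightarrow> real) \<Rightarrow> bool" where
  "weakly_lsc F \<longleftrightarrow> (\<forall>s x. weak_conv s x \<longrightarrow> ereal (F x) \<le> liminf (\<lambda>k. ereal (F (s k))))"

definition weak_limit_point :: "(nat \<Rightarrow> 'a::real_normed_vector) \<Rightarrow> 'a \<Rightarrow> bool" where
  "weak_limit_point s x \<longleftrightarrow> (\<exists>r. strict_mono r \<and> weak_conv (s \<circ> r) x)"

end

theory Submission
  imports Defs
begin

lemma L2_bound:
  assumes u: "u \<in> borel_measurable M" and a: "a \<in> L2 M" and b: "b \<in> L2 M"
    and bd: "\<And>\<omega>. (u \<omega>)^2 \<le> c * ((a \<omega>)^2 + (b \<omega>)^2)"
  shows "u \<in> L2 M"
proof -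
  have i: "integrable M (\<lambda>\<omega>. c * ((a \<omega>)^2 + (b \<omega>)^2))"
    using a b by (auto simp: L2_def)
  have "integrable M (\<lambda>\<omega>. (u \<omega>)^2)"
    by (rule Bochner_Integration.integrable_bound[OF i]) (use u bd in \<open>auto intro: order_trans[OF _ abs_ge_self]\<close>)
  with u show ?thesis by (simp add: L2_def)
qed

lemma L2_meas: "u \<in> L2 M \<Longrightarrow> u \<in> borel_measurable M"
  by (simp add: L2_def)

lemma L2_int: "u \<in> L2 M \<Longrightarrow> integrable M (\<lambda>\<omega>. (u \<omega>)^2)"
  by (simp add: L2_def)

lemma L2_add: assumes "u \<in> L2 M" "v \<in> L2 M" shows "(\<lambda>\<omega>. u \<omega> + v \<omega>) \<in> L2 M"
proof (rule L2_bound[OF _ assms, where c=2])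
  show "(\<lambda>\<omega>. u \<omega> + v \<omega>) \<in> borel_measurable M" using assms by (auto simp: L2_def)
  fix \<omega> show "(u \<omega> + v \<omega>)\<^sup>2 \<le> 2 * ((u \<omega>)\<^sup>2 + (v \<omega>)\<^sup>2)"
    by (smt (verit) power2_diff power2_sum zero_le_power2)
qed

lemma L2_cmult: assumes "u \<in> L2 M" shows "(\<lambda>\<omega>. c * u \<omega>) \<in> L2 M"
proof (rule L2_bound[OF _ assms assms, where c="c^2"])
  show "(\<lambda>\<omega>. c * u \<omega>) \<in> borel_measurable M" using assms by (auto simp: L2_def)
  fix \<omega> show "(c * u \<omega>)\<^sup>2 \<le> c^2 * ((u \<omega>)\<^sup>2 + (u \<omega>)\<^sup>2)"
    by (simp add: power_mult_distrib mult_left_mono)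
qed

lemma L2_div: assumes "u \<in> L2 M" shows "(\<lambda>\<omega>. u \<omega> / c) \<in> L2 M"
  using L2_cmult[OF assms, of "1/c"] by simp

lemma L2_uminus: assumes "u \<in> L2 M" shows "(\<lambda>\<omega>. - u \<omega>) \<in> L2 M"
  using L2_cmult[OF assms, of "-1"] by simp

lemma L2_diff: assumes "u \<in> L2 M" "v \<in> L2 M" shows "(\<lambda>\<omega>. u \<omega> - v \<omega>) \<in> L2 M"
  using L2_add[OF assms(1) L2_uminus[OF assms(2)]] by simp

lemma L2_pos: assumes "u \<in> L2 M" shows "pos_part u \<in> L2 M"
proof (rule L2_bound[OF _ assms assms, where c=1])
  show "pos_part u \<in> borel_measurable M" using assms by (auto simp: L2_def pos_part_def)
  fix \<omega> show "(pos_part u \<omega>)\<^sup>2 \<le> 1 * ((u \<omega>)\<^sup>2 + (u \<omega>)\<^sup>2)"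
    by (auto simp: pos_part_def max_def)
qed

lemma L2_min: assumes "u \<in> L2 M" "v \<in> L2 M" shows "(\<lambda>\<omega>. min (u \<omega>) (v \<omega>)) \<in> L2 M"
proof (rule L2_bound[OF _ assms, where c=1])
  show "(\<lambda>\<omega>. min (u \<omega>) (v \<omega>)) \<in> borel_measurable M" using assms by (auto simp: L2_def)
  fix \<omega> show "(min (u \<omega>) (v \<omega>))\<^sup>2 \<le> 1 * ((u \<omega>)\<^sup>2 + (v \<omega>)\<^sup>2)"
    by (auto simp: min_def)
qed

lemma L2_prod: assumes "u \<in> L2 M" "v \<in> L2 M" shows "integrable M (\<lambda>\<omega>. u \<omega> * v \<omega>)"
proof -
  have i: "integrable M (\<lambda>\<omega>. (u \<omega>)^2 + (v \<omega>)^2)"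
    using assms by (auto simp: L2_def)
  show ?thesis
  proof (rule Bochner_Integration.integrable_bound[OF i])
    show "(\<lambda>\<omega>. u \<omega> * v \<omega>) \<in> borel_measurable M" using assms by (auto simp: L2_def)
    have "\<bar>u \<omega> * v \<omega>\<bar> \<le> (u \<omega>)^2 + (v \<omega>)^2" for \<omega>
    proof -
      have "2 * \<bar>u \<omega>\<bar> * \<bar>v \<omega>\<bar> \<le> (u \<omega>)^2 + (v \<omega>)^2" using sum_squares_bound[of "\<bar>u \<omega>\<bar>" "\<bar>v \<omega>\<bar>"] by simp
      moreover have "0 \<le> \<bar>u \<omega>\<bar> * \<bar>v \<omega>\<bar>" by simp
      moreover have "\<bar>u \<omega> * v \<omega>\<bar> = \<bar>u \<omega>\<bar> * \<bar>v \<omega>\<bar>" by (rule abs_mult)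
      ultimately show ?thesis by linarith
    qed
    then show "AE \<omega> in M. norm (u \<omega> * v \<omega>) \<le> norm ((u \<omega>)^2 + (v \<omega>)^2)" by auto
  qed
qed

lemma N_mono:
  fixes u v :: "'w \<Rightarrow> real"
  assumes "integrable M (\<lambda>\<omega>. (v \<omega>)^2)" "AE \<omega> in M. (u \<omega>)^2 \<le> (v \<omega>)^2"
  shows "(LINT \<omega>|M. (u \<omega>)^2) \<le> (LINT \<omega>|M. (v \<omega>)^2)"
  by (rule integral_mono_AE') (use assms in auto)

lemma N_nonneg: fixes u :: "'w \<Rightarrow> real" shows "0 \<le> (LINT \<omega>|M. (u \<omega>)^2)"
  by (rule Bochner_Integration.integral_nonneg) simp

lemma L2norm_sq: fixes u :: "'w \<Rightarrow> real" shows "(L2norm M u)^2 = (LINT \<omega>|M. (u \<omega>)^2)"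
  by (simp add: L2norm_def N_nonneg)

lemma L2norm_nonneg: "0 \<le> L2norm M u"
  by (simp add: L2norm_def N_nonneg)

lemma P1: "0 \<le> (b::real) \<Longrightarrow> (max a 0)^2 \<le> (max (a + b) 0)^2"
  by (intro power_mono) auto
lemma P2: "0 \<le> (b::real) \<Longrightarrow> b \<le> c \<Longrightarrow> (max (a + b) 0)^2 \<le> (max a 0 + c)^2"
  by (intro power_mono) auto
lemma P3: "(a::real) \<le> 0 \<Longrightarrow> 0 \<le> b \<Longrightarrow> b \<le> c \<Longrightarrow> (max (a + b) 0)^2 \<le> c^2"
  by (intro power_mono) auto
lemma P4: "0 \<le> (b::real) \<Longrightarrow> (max a 0)^2 \<le> (min (-a) b)^2"
  by (cases "a \<le> 0") (auto simp: min_def max_def)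
lemma P5: "max (a + u) 0 = u - min (-a) (u::real)"
  by (auto simp: min_def max_def)
lemma P6: assumes "(t::real) > 0" shows "u^2 \<le> (u - V)^2 + t*u^2 + V^2/t"
proof -
  have a: "2*(t*u)*V \<le> (t*u)^2 + V^2" by (rule sum_squares_bound)
  have b: "t*(u-V)^2 = t*u^2 - 2*(t*u)*V + t*V^2" by (simp add: power2_diff algebra_simps)
  have c: "0 \<le> t*V^2" using assms by simp
  have d: "(t*u)^2 = t*(t*u^2)" by (simp add: power2_eq_square)
  have "t*u^2 \<le> t*(u - V)^2 + t*(t*u^2) + V^2" using a b c d by linarith
  then have "t*u^2 \<le> t*((u - V)^2 + t*u^2 + V^2/t)" using assms by (simp add: algebra_simps)
  then show ?thesis using assms by simp
qed

lemma lsc_ev: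
  assumes "weakly_lsc F" "weak_conv s xb" "c < F xb"
  shows "eventually (\<lambda>j. c < F (s j)) sequentially"
proof -
  have "ereal (F xb) \<le> liminf (\<lambda>k. ereal (F (s k)))" using assms by (simp add: weakly_lsc_def)
  then have "\<forall>y < ereal (F xb). eventually (\<lambda>k. y < ereal (F (s k))) sequentially"
    by (simp add: le_Liminf_iff)
  moreover have "ereal c < ereal (F xb)" using assms(3) by simp
  ultimately have "eventually (\<lambda>k. ereal c < ereal (F (s k))) sequentially" by blast
  then show ?thesis by simp
qed

lemma lsc_conclude:
  assumes "weakly_lsc F" "weak_conv s xb"
    "\<And>\<delta>. \<delta> > 0 \<Longrightarrow> eventually (\<lambda>j. F (s j) < c + \<delta>) sequentially"
  shows "F xb \<le> c"
proof (rule ccontr)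
  assume n: "\<not> F xb \<le> c"
  define \<delta> where "\<delta> = (F xb - c)/2"
  have n2: "c < F xb" using n by simp
  have d: "\<delta> > 0" "c + \<delta> < F xb" using n2 by (simp_all add: \<delta>_def field_simps)
  have "eventually (\<lambda>j. c + \<delta> < F (s j)) sequentially" using lsc_ev[OF assms(1,2) d(2)] .
  moreover have "eventually (\<lambda>j. F (s j) < c + \<delta>) sequentially" using assms(3) d(1) .
  ultimately have "eventually (\<lambda>j. False) sequentially" by eventually_elim auto
  then show False by simp
qed

lemma ev_subseq: "strict_mono r \<Longrightarrow> eventually P sequentially \<Longrightarrow> eventually (\<lambda>j. P (r j)) sequentially"
  using filterlim_subseq[of r] by (auto simp: filterlim_iff)

theorem theorem4p2:
  fixes M :: "'w measure"
    and e :: "'y::banach \<Rightarrow> 'w \<Rightarrow> real"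
    and f :: "'x::banach \<Rightarrow> real"
    and g :: "'x \<Rightarrow> 'y"
    and x :: "nat \<Rightarrow> 'x"
    and lam w :: "nat \<Rightarrow> 'w \<Rightarrow> real"
    and wmax :: "'w \<Rightarrow> real"
    and \<rho> \<epsilon> :: "nat \<Rightarrow> real"
    and \<gamma> \<tau> :: real
    and xbar :: 'x
  assumes emb: "dense_embedding M e"
    and f_lsc: "weakly_lsc f"
    and g_lsc: "weakly_lsc (\<lambda>x. L2norm M (gplus e g x))"
    and lam0: "lam 0 \<in> L2 M"
    and rho0: "\<rho> 0 > 0"
    and wmax: "wmax \<in> L2 M" "AE \<omega> in M. wmax \<omega> \<ge> 0"
    and gamma: "\<gamma> > 1"
    and tau: "0 < \<tau>" "\<tau> < 1"
    and w_L2: "\<And>k. w k \<in> L2 M"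
    and w_bnd: "\<And>k. AE \<omega> in M. 0 \<le> w k \<omega> \<and> w k \<omega> \<le> wmax \<omega>"
    and eps_dec: "decseq \<epsilon>"
    and eps_lim: "\<epsilon> \<longlonglongrightarrow> 0"
    and x_approx: "\<And>k y. aug_lagr M e f g (\<rho> k) (x (Suc k)) (w k)
                          \<le> aug_lagr M e f g (\<rho> k) y (w k) + \<epsilon> k"
    and lam_upd: "\<And>k. lam (Suc k) = pos_part (\<lambda>\<omega>. w k \<omega> + \<rho> k * e (g (x (Suc k))) \<omega>)"
    and rho_upd: "\<And>k. \<rho> (Suc k) =
         (if k = 0 \<or>
             L2norm M (\<lambda>\<omega>. min (- e (g (x (Suc k))) \<omega>) (w k \<omega> / \<rho> k))
               \<le> \<tau> * L2norm M (\<lambda>\<omega>. min (- e (g (x k)) \<omega>) (w (k - 1) \<omega> / \<rho> (k - 1)))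
          then \<rho> k else \<gamma> * \<rho> k)"
    and wlp: "weak_limit_point x xbar"
  shows "(\<forall>y. (L2norm M (gplus e g xbar))^2 \<le> (L2norm M (gplus e g y))^2)
       \<and> ((AE \<omega> in M. e (g xbar) \<omega> \<le> 0) \<longrightarrow>
            (\<forall>y. (AE \<omega> in M. e (g y) \<omega> \<le> 0) \<longrightarrow> f xbar \<le> f y))"
proof -
  have EL2: "\<And>z. e z \<in> L2 M" using emb by (simp add: dense_embedding_def)
  have wmaxL2: "wmax \<in> L2 M" using wmax(1) .
  have rho_cases: "\<rho> (Suc k) = \<rho> k \<or> \<rho> (Suc k) = \<gamma> * \<rho> k" for k
    using rho_upd[of k] by presburger
  have rpos: "\<rho> k > 0" for k
  proof (induction k)
    case 0 show ?case using rho0 .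
  next
    case (Suc k) then show ?case using rho_cases[of k] gamma by auto
  qed
  have rstep: "\<rho> k \<le> \<rho> (Suc k)" for k
  proof -
    have "\<rho> k * 1 \<le> \<rho> k * \<gamma>" using gamma rpos[of k] by (intro mult_left_mono) auto
    then show ?thesis using rho_cases[of k] by (auto simp: mult.commute)
  qed
  have rinc: "incseq \<rho>" by (rule incseq_SucI) (use rstep in auto)
  have rge0: "\<rho> 0 \<le> \<rho> k" for k using rinc by (simp add: incseq_def)
  have epsle: "\<epsilon> k \<le> \<epsilon> 0" for k using eps_dec by (simp add: decseq_def)
  have wnn: "AE \<omega> in M. 0 \<le> w k \<omega> / \<rho> k \<and> w k \<omega> / \<rho> k \<le> wmax \<omega> / \<rho> k" for k
    using w_bnd[of k] by eventually_elim (use rpos[of k] in \<open>auto intro: divide_right_mono\<close>)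
  obtain r where r: "strict_mono r" "weak_conv (x \<circ> r) xbar"
    using wlp by (auto simp: weak_limit_point_def)
  define G where "G = (\<lambda>z. L2norm M (gplus e g z))"
  have Glsc: "weakly_lsc G" using g_lsc by (simp add: G_def)
  have Gnn: "0 \<le> G z" for z by (simp add: G_def L2norm_nonneg)
  define C2 where "C2 = (LINT \<omega>|M. (wmax \<omega>)^2)"
  have C2nn: "0 \<le> C2" by (simp add: C2_def N_nonneg)

  have KI: "f (x (Suc k)) + \<rho> k / 2 * (L2norm M (pos_part (\<lambda>\<omega>. e (g (x (Suc k))) \<omega> + w k \<omega> / \<rho> k)))^2
      \<le> f y + \<rho> k / 2 * (L2norm M (pos_part (\<lambda>\<omega>. e (g y) \<omega> + w k \<omega> / \<rho> k)))^2 + \<epsilon> k" for k y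
    by (rule x_approx[unfolded aug_lagr_def])

  have low: "(G (x (Suc k)))^2 \<le> (L2norm M (pos_part (\<lambda>\<omega>. e (g (x (Suc k))) \<omega> + w k \<omega> / \<rho> k)))^2" for k
  proof -
    have L: "pos_part (\<lambda>\<omega>. e (g (x (Suc k))) \<omega> + w k \<omega> / \<rho> k) \<in> L2 M"
      by (intro L2_pos L2_add EL2 L2_div w_L2)
    show ?thesis unfolding G_def L2norm_sq gplus_def
      apply (rule N_mono[OF L2_int[OF L]])
      using wnn[of k] apply eventually_elim
      by (auto simp: pos_part_def intro!: P1)
  qed

  have uB: "(L2norm M (\<lambda>\<omega>. w k \<omega> / \<rho> k))^2 \<le> C2 / (\<rho> k)^2" for k
  proof -
    have "(L2norm M (\<lambda>\<omega>. w k \<omega> / \<rho> k))^2 \<le> (L2norm M (\<lambda>\<omega>. wmax \<omega> / \<rho> k))^2"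
      unfolding L2norm_sq
      apply (rule N_mono[OF L2_int[OF L2_div[OF wmaxL2]]])
      using wnn[of k] apply eventually_elim
      by (auto intro!: power_mono)
    also have "\<dots> = C2 / (\<rho> k)^2" unfolding L2norm_sq C2_def by (simp add: power_divide)
    finally show ?thesis .
  qed

  have pu: "(L2norm M (pos_part (\<lambda>\<omega>. e (g y) \<omega> + w k \<omega> / \<rho> k)))^2 \<le> (L2norm M (\<lambda>\<omega>. w k \<omega> / \<rho> k))^2"
    if fy: "AE \<omega> in M. e (g y) \<omega> \<le> 0" for k y
    unfolding L2norm_sq
    apply (rule N_mono[OF L2_int[OF L2_div[OF w_L2]]])
    using fy wnn[of k] apply eventually_elim
    by (auto simp: pos_part_def intro!: P3)

  have upB: "(L2norm M (pos_part (\<lambda>\<omega>. e (g y) \<omega> + w k \<omega> / \<rho> k)))^2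
      \<le> (G y)^2 + 2 / \<rho> k * (LINT \<omega>|M. pos_part (e (g y)) \<omega> * wmax \<omega>) + C2 / (\<rho> k)^2" for k y
  proof -
    let ?gp = "pos_part (e (g y))"
    have gpL: "?gp \<in> L2 M" by (intro L2_pos EL2)
    have sL: "(\<lambda>\<omega>. ?gp \<omega> + wmax \<omega> / \<rho> k) \<in> L2 M" by (intro L2_add gpL L2_div wmaxL2)
    have "(L2norm M (pos_part (\<lambda>\<omega>. e (g y) \<omega> + w k \<omega> / \<rho> k)))^2 \<le> (L2norm M (\<lambda>\<omega>. ?gp \<omega> + wmax \<omega> / \<rho> k))^2"
      unfolding L2norm_sq
      apply (rule N_mono[OF L2_int[OF sL]])
      using wnn[of k] apply eventually_elim
      by (auto simp: pos_part_def intro!: P2)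
    also have "\<dots> = (G y)^2 + 2 / \<rho> k * (LINT \<omega>|M. ?gp \<omega> * wmax \<omega>) + C2 / (\<rho> k)^2"
    proof -
      have eq: "(\<lambda>\<omega>. (?gp \<omega> + wmax \<omega> / \<rho> k)^2) = (\<lambda>\<omega>. (?gp \<omega>)^2 + ((2 / \<rho> k) * (?gp \<omega> * wmax \<omega>) + (wmax \<omega>)^2 / (\<rho> k)^2))"
        by (rule ext) (simp add: power2_sum power_divide)
      have i1: "integrable M (\<lambda>\<omega>. (?gp \<omega>)^2)" by (rule L2_int[OF gpL])
      have i2: "integrable M (\<lambda>\<omega>. ?gp \<omega> * wmax \<omega>)" by (rule L2_prod[OF gpL wmaxL2])
      have i3: "integrable M (\<lambda>\<omega>. (wmax \<omega>)^2)" by (rule L2_int[OF wmaxL2])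
      have "(LINT \<omega>|M. (?gp \<omega>)^2 + ((2 / \<rho> k) * (?gp \<omega> * wmax \<omega>) + (wmax \<omega>)^2 / (\<rho> k)^2))
          = (LINT \<omega>|M. (?gp \<omega>)^2) + ((LINT \<omega>|M. (2 / \<rho> k) * (?gp \<omega> * wmax \<omega>)) + (LINT \<omega>|M. (wmax \<omega>)^2 / (\<rho> k)^2))"
        using i1 i2 i3 by (simp add: Bochner_Integration.integral_add)
      then show ?thesis unfolding L2norm_sq eq G_def gplus_def C2_def by simp
    qed
    finally show ?thesis .
  qed

  show ?thesis
  proof (cases "\<exists>K. \<forall>k\<ge>K. \<rho> (Suc k) = \<rho> k")
    case True
    then obtain K where K: "\<And>k. k \<ge> K \<Longrightarrow> \<rho> (Suc k) = \<rho> k" by blast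
    define a where "a k = L2norm M (\<lambda>\<omega>. min (- e (g (x k)) \<omega>) (w (k - 1) \<omega> / \<rho> (k - 1)))" for k
    have anng: "0 \<le> a k" for k by (simp add: a_def L2norm_nonneg)
    have arec: "a (Suc k) \<le> \<tau> * a k" if k: "Suc K \<le> k" for k
    proof -
      have "\<rho> (Suc k) = \<rho> k" using K k by simp
      moreover have "\<gamma> * \<rho> k \<noteq> \<rho> k" using gamma rpos[of k] by simp
      ultimately have "k = 0 \<or> L2norm M (\<lambda>\<omega>. min (- e (g (x (Suc k))) \<omega>) (w k \<omega> / \<rho> k))
               \<le> \<tau> * L2norm M (\<lambda>\<omega>. min (- e (g (x k)) \<omega>) (w (k - 1) \<omega> / \<rho> (k - 1)))"
        using rho_upd[of k] by (auto split: if_splits)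
      then show ?thesis using k by (simp add: a_def)
    qed
    have ageo: "a (n + Suc K) \<le> \<tau>^n * a (Suc K)" for n
    proof (induction n)
      case 0 then show ?case by simp
    next
      case (Suc n)
      have "a (Suc n + Suc K) = a (Suc (n + Suc K))" by simp
      also have "\<dots> \<le> \<tau> * a (n + Suc K)" by (rule arec) simp
      also have "\<dots> \<le> \<tau> * (\<tau>^n * a (Suc K))" using Suc tau by (intro mult_left_mono) auto
      finally show ?case by (simp add: mult.assoc)
    qed
    have alim: "a \<longlonglongrightarrow> 0"
    proof -
      have "(\<lambda>n. \<tau>^n * a (Suc K)) \<longlonglongrightarrow> 0 * a (Suc K)"
        by (intro tendsto_mult LIMSEQ_power_zero tendsto_const) (use tau in simp)
      then have t: "(\<lambda>n. \<tau>^n * a (Suc K)) \<longlonglongrightarrow> 0" by simp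
      have "(\<lambda>n. a (n + Suc K)) \<longlonglongrightarrow> 0"
        by (rule Lim_null_comparison[OF _ t]) (intro always_eventually allI, use ageo anng in simp)
      then show ?thesis by (rule LIMSEQ_offset)
    qed
    have Ga: "G (x (Suc k)) \<le> a (Suc k)" for k
    proof -
      let ?V = "\<lambda>\<omega>. min (- e (g (x (Suc k))) \<omega>) (w k \<omega> / \<rho> k)"
      have VL: "?V \<in> L2 M" by (intro L2_min L2_uminus EL2 L2_div w_L2)
      have "(G (x (Suc k)))^2 \<le> (L2norm M ?V)^2" unfolding G_def L2norm_sq gplus_def
        apply (rule N_mono[OF L2_int[OF VL]])
        using wnn[of k] apply eventually_elim
        by (auto simp: pos_part_def intro!: P4)
      then have "G (x (Suc k)) \<le> L2norm M ?V" using L2norm_nonneg by (rule power2_le_imp_le)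
      then show ?thesis by (simp add: a_def)
    qed
    have part_a: "\<forall>y. (L2norm M (gplus e g xbar))^2 \<le> (L2norm M (gplus e g y))^2"
    proof
      fix y
      have "G xbar \<le> 0"
      proof (rule lsc_conclude[OF Glsc r(2)])
        fix \<delta> :: real assume d: "\<delta> > 0"
        have "eventually (\<lambda>k. a (Suc k) < \<delta>) sequentially"
          using order_tendstoD(2)[OF LIMSEQ_Suc[OF alim] d] .
        then have "eventually (\<lambda>k. G (x (Suc k)) < 0 + \<delta>) sequentially"
          by (rule eventually_mono) (use Ga in \<open>auto intro: le_less_trans\<close>)
        then have "eventually (\<lambda>m. G (x m) < 0 + \<delta>) sequentially"
          using eventually_sequentially_Suc[of "\<lambda>m. G (x m) < 0 + \<delta>"] by blast
        then have "eventually (\<lambda>j. G (x (r j)) < 0 + \<delta>) sequentially"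
          by (rule ev_subseq[OF r(1)])
        then show "eventually (\<lambda>j. G ((x \<circ> r) j) < 0 + \<delta>) sequentially" by (simp add: o_def)
      qed
      then have "G xbar = 0" using Gnn[of xbar] by simp
      then have "L2norm M (gplus e g xbar) = 0" by (simp add: G_def)
      then show "(L2norm M (gplus e g xbar))^2 \<le> (L2norm M (gplus e g y))^2" by simp
    qed
    have part_b: "(AE \<omega> in M. e (g xbar) \<omega> \<le> 0) \<longrightarrow> (\<forall>y. (AE \<omega> in M. e (g y) \<omega> \<le> 0) \<longrightarrow> f xbar \<le> f y)"
    proof (intro impI allI)
      fix y assume fy: "AE \<omega> in M. e (g y) \<omega> \<le> 0"
      define rb where "rb = \<rho> K"
      have rK: "\<rho> k = rb" if "K \<le> k" for k
        using that by (induction k rule: dec_induct) (auto simp: rb_def K)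
      have rbpos: "rb > 0" using rpos by (simp add: rb_def)
      define R where "R k = rb / 2 * ((a (Suc k) + inverse (real (Suc k))) * C2 / rb^2 + a (Suc k)) + \<epsilon> k" for k
      have fR: "f (x (Suc k)) \<le> f y + R k" if kK: "K \<le> k" for k
      proof -
        have rk: "\<rho> k = rb" using rK kK .
        define t where "t = a (Suc k) + inverse (real (Suc k))"
        have tpos: "t > 0" using anng[of "Suc k"] by (simp add: t_def add_nonneg_pos)
        have at: "a (Suc k) \<le> t" by (simp add: t_def)
        let ?u = "\<lambda>\<omega>. w k \<omega> / \<rho> k"
        let ?V = "\<lambda>\<omega>. min (- e (g (x (Suc k))) \<omega>) (w k \<omega> / \<rho> k)"
        let ?q = "pos_part (\<lambda>\<omega>. e (g (x (Suc k))) \<omega> + w k \<omega> / \<rho> k)"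
        let ?p = "pos_part (\<lambda>\<omega>. e (g y) \<omega> + w k \<omega> / \<rho> k)"
        have uL: "?u \<in> L2 M" by (intro L2_div w_L2)
        have VL: "?V \<in> L2 M" by (intro L2_min L2_uminus EL2 L2_div w_L2)
        have qeq: "?q = (\<lambda>\<omega>. ?u \<omega> - ?V \<omega>)" by (rule ext) (simp add: pos_part_def P5)
        have aV: "a (Suc k) = L2norm M ?V" by (simp add: a_def)
        have I1: "(L2norm M ?p)^2 \<le> (L2norm M ?u)^2" by (rule pu[OF fy])
        have I2: "(L2norm M ?u)^2 \<le> (L2norm M ?q)^2 + t * (L2norm M ?u)^2 + (L2norm M ?V)^2 / t"
        proof -
          have iq: "integrable M (\<lambda>\<omega>. (?u \<omega> - ?V \<omega>)^2)" by (rule L2_int[OF L2_diff[OF uL VL]])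
          have iu: "integrable M (\<lambda>\<omega>. (?u \<omega>)^2)" by (rule L2_int[OF uL])
          have iV: "integrable M (\<lambda>\<omega>. (?V \<omega>)^2)" by (rule L2_int[OF VL])
          have "(LINT \<omega>|M. (?u \<omega>)^2) \<le> (LINT \<omega>|M. (?u \<omega> - ?V \<omega>)^2 + t * (?u \<omega>)^2 + (?V \<omega>)^2 / t)"
            by (rule Bochner_Integration.integral_mono) (use iq iu iV P6[OF tpos] in auto)
          also have "\<dots> = (LINT \<omega>|M. (?u \<omega> - ?V \<omega>)^2) + t * (LINT \<omega>|M. (?u \<omega>)^2) + (LINT \<omega>|M. (?V \<omega>)^2) / t"
            using iq iu iV by (simp add: Bochner_Integration.integral_add)
          finally show ?thesis unfolding L2norm_sq qeq .
        qed
        have I3: "t * (L2norm M ?u)^2 \<le> t * (C2 / rb^2)" using uB[of k] tpos rk by (intro mult_left_mono) auto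
        have I4: "(L2norm M ?V)^2 / t \<le> a (Suc k)"
        proof -
          have "(a (Suc k))^2 \<le> a (Suc k) * t" unfolding power2_eq_square
            using anng[of "Suc k"] at by (intro mult_left_mono) auto
          then show ?thesis using tpos aV by (simp add: pos_divide_le_eq)
        qed
        have D: "(L2norm M ?p)^2 - (L2norm M ?q)^2 \<le> t * C2 / rb^2 + a (Suc k)"
          using I1 I2 I3 I4 by simp
        have "rb / 2 * ((L2norm M ?p)^2 - (L2norm M ?q)^2) \<le> rb / 2 * (t * C2 / rb^2 + a (Suc k))"
          by (rule mult_left_mono[OF D]) (use rbpos in simp)
        then have "rb / 2 * (L2norm M ?p)^2 - rb / 2 * (L2norm M ?q)^2 \<le> rb / 2 * (t * C2 / rb^2 + a (Suc k))"
          by (simp add: right_diff_distrib)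
        moreover have "f (x (Suc k)) + rb / 2 * (L2norm M ?q)^2 \<le> f y + rb / 2 * (L2norm M ?p)^2 + \<epsilon> k"
          using KI[of k y] rk by simp
        ultimately show ?thesis unfolding R_def t_def by linarith
      qed
      have Rlim: "R \<longlonglongrightarrow> 0"
      proof -
        have "R \<longlonglongrightarrow> rb / 2 * ((0 + 0) * C2 / rb^2 + 0) + 0"
          unfolding R_def[abs_def]
          by (intro tendsto_intros LIMSEQ_Suc[OF alim] LIMSEQ_inverse_real_of_nat eps_lim) (use rbpos in simp)
        then show ?thesis by simp
      qed
      show "f xbar \<le> f y"
      proof (rule lsc_conclude[OF f_lsc r(2)])
        fix \<delta> :: real assume d: "\<delta> > 0"
        have "eventually (\<lambda>k. R k < \<delta>) sequentially" using order_tendstoD(2)[OF Rlim d] .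
        moreover have "eventually (\<lambda>k. k \<ge> K) sequentially" by (rule eventually_ge_at_top)
        ultimately have "eventually (\<lambda>k. f (x (Suc k)) < f y + \<delta>) sequentially"
          apply eventually_elim
          subgoal for k using fR[of k] by linarith
          done
        then have "eventually (\<lambda>m. f (x m) < f y + \<delta>) sequentially"
          using eventually_sequentially_Suc[of "\<lambda>m. f (x m) < f y + \<delta>"] by blast
        then have "eventually (\<lambda>j. f (x (r j)) < f y + \<delta>) sequentially"
          by (rule ev_subseq[OF r(1)])
        then show "eventually (\<lambda>j. f ((x \<circ> r) j) < f y + \<delta>) sequentially" by (simp add: o_def)
      qed
    qed
    show ?thesis using part_a part_b by blast
  next
    case False
    have inc: "\<exists>k\<ge>K. \<rho> (Suc k) = \<gamma> * \<rho> k" for K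
    proof -
      from False obtain k where "k \<ge> K" "\<rho> (Suc k) \<noteq> \<rho> k" by auto
      then show ?thesis using rho_cases[of k] by auto
    qed
    have grow: "\<exists>K. \<rho> 0 * \<gamma>^n \<le> \<rho> K" for n
    proof (induction n)
      case 0 show ?case by auto
    next
      case (Suc n)
      then obtain K where K: "\<rho> 0 * \<gamma>^n \<le> \<rho> K" by blast
      obtain k where k: "k \<ge> K" "\<rho> (Suc k) = \<gamma> * \<rho> k" using inc by blast
      have "\<rho> K \<le> \<rho> k" using rinc k(1) by (simp add: incseq_def)
      then have "\<rho> 0 * \<gamma>^n \<le> \<rho> k" using K by simp
      then have "\<gamma> * (\<rho> 0 * \<gamma>^n) \<le> \<gamma> * \<rho> k" using gamma by (intro mult_left_mono) auto
      then have "\<rho> 0 * \<gamma>^Suc n \<le> \<rho> (Suc k)" using k(2) by (simp add: ac_simps)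
      then show ?case by blast
    qed
    have rinf: "filterlim \<rho> at_top sequentially"
      unfolding filterlim_at_top
    proof
      fix Z
      obtain n where n: "Z / \<rho> 0 < \<gamma>^n" using real_arch_pow[OF gamma] by blast
      then have Zn: "Z < \<rho> 0 * \<gamma>^n" using rho0 by (simp add: pos_divide_less_eq mult.commute)
      obtain K where K: "\<rho> 0 * \<gamma>^n \<le> \<rho> K" using grow by blast
      show "eventually (\<lambda>k. Z \<le> \<rho> k) sequentially"
        using eventually_ge_at_top[of K]
      proof eventually_elim
        case (elim k)
        then have "\<rho> K \<le> \<rho> k" using rinc by (simp add: incseq_def)
        then show ?case using Zn K by linarith
      qed
    qed
    have part_a: "\<forall>y. (L2norm M (gplus e g xbar))^2 \<le> (L2norm M (gplus e g y))^2"
    proof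
      fix y
      define C1 where "C1 = (LINT \<omega>|M. pos_part (e (g y)) \<omega> * wmax \<omega>)"
      define D where "D = 2 * (f y - (f xbar - 1) + \<epsilon> 0) + 2 * \<bar>C1\<bar> + C2 / \<rho> 0"
      have keyB: "\<rho> k * ((G (x (Suc k)))^2 - (G y)^2) \<le> D" if fk: "f (x (Suc k)) > f xbar - 1" for k
      proof -
        let ?q = "pos_part (\<lambda>\<omega>. e (g (x (Suc k))) \<omega> + w k \<omega> / \<rho> k)"
        let ?p = "pos_part (\<lambda>\<omega>. e (g y) \<omega> + w k \<omega> / \<rho> k)"
        have rk: "\<rho> k > 0" by (rule rpos)
        have "\<rho> k * (L2norm M ?p)^2 \<le> \<rho> k * ((G y)^2 + 2 / \<rho> k * C1 + C2 / (\<rho> k)^2)"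
          using upB[of y k] rk unfolding C1_def by (intro mult_left_mono) auto
        also have "\<dots> = \<rho> k * (G y)^2 + 2 * C1 + C2 / \<rho> k"
          using rk by (simp add: field_simps power2_eq_square)
        finally have A: "\<rho> k * (L2norm M ?p)^2 \<le> \<rho> k * (G y)^2 + 2 * C1 + C2 / \<rho> k" .
        have B: "\<rho> k * (G (x (Suc k)))^2 \<le> \<rho> k * (L2norm M ?q)^2"
          using low[of k] rk by (intro mult_left_mono) auto
        have C: "C2 / \<rho> k \<le> C2 / \<rho> 0" using C2nn rho0 rge0[of k] by (intro divide_left_mono) auto
        have "2 * (f (x (Suc k)) + \<rho> k / 2 * (L2norm M ?q)^2) \<le> 2 * (f y + \<rho> k / 2 * (L2norm M ?p)^2 + \<epsilon> k)"
          using KI[of k y] by simp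
        then have E: "2 * f (x (Suc k)) + \<rho> k * (L2norm M ?q)^2 \<le> 2 * f y + \<rho> k * (L2norm M ?p)^2 + 2 * \<epsilon> k"
          by (simp add: algebra_simps)
        have F: "\<rho> k * ((G (x (Suc k)))^2 - (G y)^2) = \<rho> k * (G (x (Suc k)))^2 - \<rho> k * (G y)^2"
          by (simp add: right_diff_distrib)
        show ?thesis unfolding F D_def using A B C E fk epsle[of k] abs_ge_self[of C1] by argo
      qed
      have "G xbar \<le> G y"
      proof (rule lsc_conclude[OF Glsc r(2)])
        fix \<delta> :: real assume d: "\<delta> > 0"
        define T where "T = (\<bar>D\<bar> + 1) / \<delta>^2"
        have ev1: "eventually (\<lambda>k. T \<le> \<rho> k) sequentially" using rinf by (simp add: filterlim_at_top)
        have "eventually (\<lambda>k. f (x (Suc k)) > f xbar - 1 \<longrightarrow> G (x (Suc k)) < G y + \<delta>) sequentially"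
          using ev1
        proof eventually_elim
          case (elim k)
          show ?case
          proof (intro impI, rule ccontr)
            assume fk: "f (x (Suc k)) > f xbar - 1" and n: "\<not> G (x (Suc k)) < G y + \<delta>"
            then have "G y + \<delta> \<le> G (x (Suc k))" by simp
            then have "(G y + \<delta>)^2 \<le> (G (x (Suc k)))^2" using Gnn[of y] d by (intro power_mono) auto
            moreover have "(G y + \<delta>)^2 = (G y)^2 + 2 * G y * \<delta> + \<delta>^2" by (simp add: power2_sum)
            moreover have "0 \<le> 2 * G y * \<delta>" using Gnn[of y] d by simp
            ultimately have h: "\<delta>^2 \<le> (G (x (Suc k)))^2 - (G y)^2" by linarith
            have "T * \<delta>^2 \<le> \<rho> k * ((G (x (Suc k)))^2 - (G y)^2)"
              using elim h rpos[of k] by (intro mult_mono) auto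
            moreover have "T * \<delta>^2 = \<bar>D\<bar> + 1" using d by (simp add: T_def)
            ultimately show False using keyB[OF fk] abs_ge_self[of D] by linarith
          qed
        qed
        then have "eventually (\<lambda>m. f (x m) > f xbar - 1 \<longrightarrow> G (x m) < G y + \<delta>) sequentially"
          using eventually_sequentially_Suc[of "\<lambda>m. f (x m) > f xbar - 1 \<longrightarrow> G (x m) < G y + \<delta>"] by blast
        then have e2: "eventually (\<lambda>j. f (x (r j)) > f xbar - 1 \<longrightarrow> G (x (r j)) < G y + \<delta>) sequentially"
          by (rule ev_subseq[OF r(1)])
        have e3: "eventually (\<lambda>j. f xbar - 1 < f ((x \<circ> r) j)) sequentially"
          by (rule lsc_ev[OF f_lsc r(2)]) simp
        from e2 e3 show "eventually (\<lambda>j. G ((x \<circ> r) j) < G y + \<delta>) sequentially"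
          by eventually_elim auto
      qed
      then have "(G xbar)^2 \<le> (G y)^2" using Gnn[of xbar] by (intro power_mono) auto
      then show "(L2norm M (gplus e g xbar))^2 \<le> (L2norm M (gplus e g y))^2" by (simp add: G_def)
    qed
    have part_b: "(AE \<omega> in M. e (g xbar) \<omega> \<le> 0) \<longrightarrow> (\<forall>y. (AE \<omega> in M. e (g y) \<omega> \<le> 0) \<longrightarrow> f xbar \<le> f y)"
    proof (intro impI allI)
      fix y assume fy: "AE \<omega> in M. e (g y) \<omega> \<le> 0"
      define R where "R k = C2 / 2 * inverse (\<rho> k) + \<epsilon> k" for k
      have fR: "f (x (Suc k)) \<le> f y + R k" for k
      proof -
        let ?q = "pos_part (\<lambda>\<omega>. e (g (x (Suc k))) \<omega> + w k \<omega> / \<rho> k)"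
        let ?p = "pos_part (\<lambda>\<omega>. e (g y) \<omega> + w k \<omega> / \<rho> k)"
        have rk: "\<rho> k > 0" by (rule rpos)
        have "(L2norm M ?p)^2 \<le> C2 / (\<rho> k)^2" using pu[OF fy, of k] uB[of k] by linarith
        then have "\<rho> k / 2 * (L2norm M ?p)^2 \<le> \<rho> k / 2 * (C2 / (\<rho> k)^2)" using rk by (intro mult_left_mono) auto
        also have "\<dots> = C2 / 2 * inverse (\<rho> k)" using rk by (simp add: field_simps power2_eq_square)
        finally have A: "\<rho> k / 2 * (L2norm M ?p)^2 \<le> C2 / 2 * inverse (\<rho> k)" .
        have B: "0 \<le> \<rho> k / 2 * (L2norm M ?q)^2" using rk by simp
        show ?thesis using KI[of k y] A B unfolding R_def by linarith
      qed
      have Rlim: "R \<longlonglongrightarrow> 0"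
      proof -
        have "R \<longlonglongrightarrow> C2 / 2 * 0 + 0"
          unfolding R_def[abs_def]
          by (intro tendsto_intros tendsto_inverse_0_at_top rinf eps_lim)
        then show ?thesis by simp
      qed
      show "f xbar \<le> f y"
      proof (rule lsc_conclude[OF f_lsc r(2)])
        fix \<delta> :: real assume d: "\<delta> > 0"
        have "eventually (\<lambda>k. R k < \<delta>) sequentially" using order_tendstoD(2)[OF Rlim d] .
        then have "eventually (\<lambda>k. f (x (Suc k)) < f y + \<delta>) sequentially"
          apply (rule eventually_mono)
          subgoal for k using fR[of k] by linarith
          done
        then have "eventually (\<lambda>m. f (x m) < f y + \<delta>) sequentially"
          using eventually_sequentially_Suc[of "\<lambda>m. f (x m) < f y + \<delta>"] by blast
        then have "eventually (\<lambda>j. f (x (r j)) < f y + \<delta>) sequentially"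
          by (rule ev_subseq[OF r(1)])
        then show "eventually (\<lambda>j. f ((x \<circ> r) j) < f y + \<delta>) sequentially" by (simp add: o_def)
      qed
    qed
    show ?thesis using part_a part_b by blast
  qed
qed

end
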